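(* Consider $S=\mathbb{Z}_+$ with convolution $*$ defined on point masses by $\delta_m*\delta_n=\delta_{\max\{m,n\}}$ if $m\ne n$ or $m=n=0$, and $\delta_n*\delta_n=q_n$ for $n\ge1$, where each $q_n=\sum_{j\in Q_n}q_n(j)\delta_j$ is a probability measure with finite support $Q_n\ni 0$ and $q_n(j)>0$ for $j\in Q_n$. Assume: for $n\ge1$, $\mathcal{L}_n\subset Q_n\subset\mathcal{L}_n\cup\{n\}$ where $\mathcal{L}_n=\{k:k<n\}$; and for $0<m<n$, $q_n(0)=q_n(m)q_m(0)$ and $q_n(0)\bigl(1+\sum_{0<k<n}1/q_k(0)\bigr)\le1$. Let $\lambda$ be the Haar measure of the hermitian discrete hypergroup $(S,* )$, and let $v_n=\lambda(n)$, $u_n=\lambda(n)-\lambda(\mathcal{L}_n)$. Then $\mathcal{X}_b(S)=\widehat{S}$, and $\widehat{S}$ with the topology of uniform convergence on compact subsets of $S$ is identified with the one-point compactification $\mathbb{Z}_+^*=\mathbb{Z}_+\cup\{\infty\}$ via $k\mapsto\chi_k$, where $\chi_\infty(n)=1$ for all $n\in\mathbb{Z}_+$ and, for $k\in\mathbb{Z}_+$, $\chi_k(n)=1$ if $n\le k$, $\chi_k(n)=\beta_k$ if $n=k+1$, and $\chi_k(n)=0$ if $n>k+1$, with $\beta_k=-\frac{\lambda(\mathcal{L}_{k+1})}{\lambda(k+1)}=-\frac{\sum_{j\in\mathcal{L}_{k+1}}v_j}{v_{k+1}}=\frac{u_{k+1}}{v_{k+1}}-1=(\delta_{k+1}*\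delta_{k+1})(k+1)-1=q_{k+1}(k+1)-1.$
   Context: $\mathbb{Z}_+=\{0,1,2,\dots\}$. Under the stated assumptions $(S,* )$ is a hermitian discrete hypergroup: $*$ is associative, $0$ is the identity, $*$ is commutative, and $0\in\operatorname{spt}(\delta_m*\delta_n)$ iff $m=n$. Its Haar measure $\lambda$ is given by $\lambda(0)=1$, $\lambda(n)=1/(\delta_n*\delta_n)(0)$ for $n\ge1$, $\lambda(A)=\sum_{j\in A}\lambda(j)$. For a complex function $\chi$ on $S$ write $\chi(m*n)=\int\chi\,d(\delta_m*\delta_n)$. $\mathcal{X}_b(S)$ is the set of nonzero bounded functions $\chi$ on $S$ with $\chi(m*n)=\chi(m)\chi(n)$ for all $m,n$ (characters); $\widehat{S}$ is the set of $\chi\in\mathcal{X}_b(S)$ with $\chi(m)=\overline{\chi(m)}$ for all $m$ (symmetric characters, the involution being the identity). *)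

theory Defs
  imports "HOL-Analysis.Analysis" "HOL-Library.Extended_Nat"
begin

text \<open>The hypergroup structure on the nonnegative integers (type nat) is determined by
  the family q, where q n j is the mass of the probability measure q_n at the point j.
  conv q m n j is the mass of the measure delta_m * delta_n at j.\<close>

definition conv :: "(nat \<Rightarrow> nat \<Rightarrow> real) \<Rightarrow> nat \<Rightarrow> nat \<Rightarrow> nat \<Rightarrow> real" where
  "conv q m n j =
     (if m \<noteq> n \<or> (m = 0 \<and> n = 0) then (if j = max m n then 1 else 0) else q n j)"

definition at_conv :: "(nat \<Rightarrow> nat \<Rightarrow> real) \<Rightarrow> (nat \<Rightarrow> complex) \<Rightarrow> nat \<Rightarrow> nat \<Rightarrow> complex" where
  "at_conv q c m n = (\<Sum>j\<in>{j. conv q m n j \<noteq> 0}. complex_of_real (conv q m n j) * c j)"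

definition haar :: "(nat \<Rightarrow> nat \<Rightarrow> real) \<Rightarrow> nat \<Rightarrow> real" where
  "haar q n = (if n = 0 then 1 else 1 / conv q n n 0)"

definition haar_set :: "(nat \<Rightarrow> nat \<Rightarrow> real) \<Rightarrow> nat set \<Rightarrow> real" where
  "haar_set q A = (\<Sum>j\<in>A. haar q j)"

definition Lset :: "nat \<Rightarrow> nat set" where
  "Lset n = {k. k < n}"

definition bchars :: "(nat \<Rightarrow> nat \<Rightarrow> real) \<Rightarrow> (nat \<Rightarrow> complex) set" where
  "bchars q = {c. c \<noteq> (\<lambda>_. 0) \<and> bounded (range c) \<and>
                    (\<forall>m n. at_conv q c m n = c m * c n)}"

text \<open>Symmetric characters (the dual S-hat); the involution on S is the identity.\<close>
definition sym_chars :: "(nat \<Rightarrow> nat \<Rightarrow> real) \<Rightarrow> (nat \<Rightarrow> complex) set" where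
  "sym_chars q = {c\<in>bchars q. \<forall>m. c m = cnj (c m)}"

definition ucc_topology :: "(nat \<Rightarrow> complex) topology" where
  "ucc_topology = topology (\<lambda>U. \<forall>f\<in>U. \<exists>K e. compact K \<and> e > 0 \<and>
        {g. \<forall>n\<in>K. norm (g n - f n) < e} \<subseteq> U)"

definition beta :: "(nat \<Rightarrow> nat \<Rightarrow> real) \<Rightarrow> nat \<Rightarrow> real" where
  "beta q k = - haar_set q (Lset (k+1)) / haar q (k+1)"

definition chi :: "(nat \<Rightarrow> nat \<Rightarrow> real) \<Rightarrow> enat \<Rightarrow> nat \<Rightarrow> complex" where
  "chi q k n = (case k of
       \<infinity> \<Rightarrow> 1
     | enat k \<Rightarrow> (if n \<le> k then 1 else if n = k + 1 then complex_of_real (beta q k) else 0))"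

end

theory Submission
  imports Defs
begin

lemma sum_atMost_last: "(\<Sum>j\<le>(n::nat). f j) = (\<Sum>j<n. f j) + f n"
  by (simp add: lessThan_Suc_atMost[symmetric])

lemma quad_roots:
  fixes a x :: complex
  assumes "(1 - a) + a * x = x * x"
  shows "x = 1 \<or> x = a - 1"
proof -
  have "(x - 1) * (x - (a - 1)) = x * x - ((1 - a) + a * x)" by (simp add: algebra_simps)
  then have "(x - 1) * (x - (a - 1)) = 0" using assms by simp
  then show ?thesis by simp
qed

locale hq =
  fixes q :: "nat \<Rightarrow> nat \<Rightarrow> real"
  assumes nonneg: "\<And>n j. n \<ge> 1 \<Longrightarrow> q n j \<ge> 0"
      and fin: "\<And>n. n \<ge> 1 \<Longrightarrow> finite {j. q n j \<noteq> 0}"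
      and prob: "\<And>n. n \<ge> 1 \<Longrightarrow> (\<Sum>j\<in>{j. q n j \<noteq> 0}. q n j) = 1"
      and zero_in: "\<And>n. n \<ge> 1 \<Longrightarrow> q n 0 \<noteq> 0"
      and sub_L: "\<And>n. n \<ge> 1 \<Longrightarrow> {j. q n j \<noteq> 0} \<subseteq> Lset n \<union> {n}"
      and mult: "\<And>m n. 0 < m \<Longrightarrow> m < n \<Longrightarrow> q n 0 = q n m * q m 0"
begin

lemma supp_le: "n \<ge> 1 \<Longrightarrow> q n j \<noteq> 0 \<Longrightarrow> j \<le> n"
  using sub_L[of n] by (auto simp: Lset_def)

lemma sum_supp_gen:
  fixes f :: "nat \<Rightarrow> 'a::real_vector"
  assumes "n \<ge> 1"
  shows "(\<Sum>j\<in>{j. q n j \<noteq> 0}. q n j *\<^sub>R f j) = (\<Sum>j\<le>n. q n j *\<^sub>R f j)"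
  by (rule sum.mono_neutral_left) (use supp_le assms in auto)

lemma sum_supp: "n \<ge> 1 \<Longrightarrow> (\<Sum>j\<in>{j. q n j \<noteq> 0}. q n j * f j) = (\<Sum>j\<le>n. q n j * f j)"
  using sum_supp_gen[of n f] by simp

lemma sum_supp_c: "n \<ge> 1 \<Longrightarrow> (\<Sum>j\<in>{j. q n j \<noteq> 0}. complex_of_real (q n j) * c j) = (\<Sum>j\<le>n. complex_of_real (q n j) * c j)"
  using sum_supp_gen[of n c] by (simp add: scaleR_conv_of_real)

lemma total_le: "n \<ge> 1 \<Longrightarrow> (\<Sum>j\<le>n. q n j) = 1"
  using sum_supp[of n "\<lambda>_. 1"] prob[of n] by simp

lemma total: "n \<ge> 1 \<Longrightarrow> (\<Sum>j<n. q n j) + q n n = 1"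
  using total_le[of n] by (simp add: lessThan_Suc_atMost[symmetric])

lemma qpos: "n \<ge> 1 \<Longrightarrow> q n 0 > 0"
  using nonneg[of n 0] zero_in[of n] by linarith

lemma haar_pos: "haar q n > 0"
  using qpos[of n] by (auto simp: haar_def conv_def)

lemma q_haar: "j < n \<Longrightarrow> q n j = q n 0 * haar q j"
proof (cases "j = 0")
  case True then show ?thesis by (simp add: haar_def)
next
  case False
  assume "j < n"
  then have "q n 0 = q n j * q j 0" using mult[of j n] False by simp
  moreover have "q j 0 \<noteq> 0" using zero_in[of j] False by simp
  ultimately show ?thesis using False by (simp add: haar_def conv_def field_simps)
qed

lemma qnn_lt1: "n \<ge> 1 \<Longrightarrow> q n n < 1"
proof -
  assume n: "n \<ge> 1"
  have "q n 0 \<le> (\<Sum>j<n. q n j)"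
    by (rule member_le_sum) (use n nonneg in auto)
  then show ?thesis using total[OF n] qpos[OF n] by linarith
qed

lemma haar_set_L: "haar_set q (Lset n) = (\<Sum>j<n. haar q j)"
  by (simp add: haar_set_def Lset_def lessThan_def)

lemma beta_eq: "beta q k = q (k+1) (k+1) - 1"
proof -
  have "(\<Sum>j<k+1. q (k+1) j) = (\<Sum>j<k+1. q (k+1) 0 * haar q j)"
    by (rule sum.cong[OF refl]) (rule q_haar, simp)
  also have "\<dots> = q (k+1) 0 * (\<Sum>j<k+1. haar q j)"
    by (simp only: sum_distrib_left)
  finally have "(\<Sum>j<k+1. q (k+1) j) = q (k+1) 0 * (\<Sum>j<k+1. haar q j)" .
  moreover have "haar q (k+1) = 1 / q (k+1) 0" by (simp add: haar_def conv_def)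
  moreover have "q (k+1) 0 \<noteq> 0" using zero_in by simp
  ultimately show ?thesis using total[of "k+1"]
    by (simp add: beta_def haar_set_L del: sum.lessThan_Suc) (simp add: field_simps)
qed

lemma beta_neg: "beta q k < 0"
  using beta_eq qnn_lt1[of "k+1"] by simp


definition chr :: "enat \<Rightarrow> nat \<Rightarrow> real" where
  "chr k n = (case k of \<infinity> \<Rightarrow> 1 | enat k \<Rightarrow> (if n \<le> k then 1 else if n = k+1 then beta q k else 0))"

lemma chi_chr: "chi q k n = complex_of_real (chr k n)"
  by (cases k) (auto simp: chi_def chr_def)

lemma at_conv_off: "m \<noteq> n \<or> (m = 0 \<and> n = 0) \<Longrightarrow> at_conv q c m n = c (max m n)"
proof -
  assume h: "m \<noteq> n \<or> (m = 0 \<and> n = 0)"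
  then have "{j. conv q m n j \<noteq> 0} = {max m n}" by (auto simp: conv_def)
  then show ?thesis using h by (simp add: at_conv_def conv_def)
qed

lemma at_conv_diag: "n \<ge> 1 \<Longrightarrow> at_conv q c n n = (\<Sum>j\<le>n. complex_of_real (q n j) * c j)"
proof -
  assume n: "n \<ge> 1"
  then have "\<And>j. conv q n n j = q n j" by (simp add: conv_def)
  then show ?thesis using sum_supp_c[OF n, of c] by (simp add: at_conv_def)
qed

lemma chr_diag: "n \<ge> 1 \<Longrightarrow> (\<Sum>j\<le>n. q n j * chr k j) = chr k n ^ 2"
proof (cases k)
  case infinity
  assume "n \<ge> 1" then show ?thesis using total_le[of n] by (simp add: chr_def infinity)
next
  case (enat k)
  assume n: "n \<ge> 1"
  consider "n \<le> k" | "n = k+1" | "n > k+1" by linarith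
  then show ?thesis
  proof cases
    case 1
    then have "(\<Sum>j\<le>n. q n j * chr (enat k) j) = (\<Sum>j\<le>n. q n j)"
      by (intro sum.cong) (auto simp: chr_def)
    then show ?thesis using total_le[OF n] 1 by (simp add: chr_def enat)
  next
    case 2
    have "(\<Sum>j\<le>n. q n j * chr (enat k) j) = (\<Sum>j<n. q n j * chr (enat k) j) + q n n * beta q k"
      using 2 by (simp add: lessThan_Suc_atMost[symmetric] chr_def)
    also have "(\<Sum>j<n. q n j * chr (enat k) j) = (\<Sum>j<n. q n j)"
      using 2 by (intro sum.cong) (auto simp: chr_def)
    finally have e: "(\<Sum>j\<le>n. q n j * chr (enat k) j) = (\<Sum>j<n. q n j) + q n n * beta q k" .
    have "(\<Sum>j<n. q n j) = - beta q k" "q n n = 1 + beta q k"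
      using total[OF n] beta_eq[of k] 2 by auto
    with e show ?thesis using 2
      by (simp add: chr_def enat power2_eq_square algebra_simps del: sum.lessThan_Suc)
  next
    case 3
    have "(\<Sum>j\<le>n. q n j * chr (enat k) j) = (\<Sum>j\<le>k+1. q n j * chr (enat k) j)"
      using 3 by (intro sum.mono_neutral_right) (auto simp: chr_def)
    also have "\<dots> = (\<Sum>j\<le>k. q n j * chr (enat k) j) + q n (k+1) * beta q k"
      by (simp add: chr_def)
    also have "(\<Sum>j\<le>k. q n j * chr (enat k) j) = (\<Sum>j\<le>k. q n j)"
      by (intro sum.cong) (auto simp: chr_def)
    also have "(\<Sum>j\<le>k. q n j) = (\<Sum>j\<le>k. q n 0 * haar q j)"
      using 3 by (intro sum.cong refl) (rule q_haar, simp)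
    also have "\<dots> = q n 0 * haar_set q (Lset (k+1))"
      by (simp add: haar_set_L sum_distrib_left lessThan_Suc_atMost del: sum.lessThan_Suc)
    also have "q n (k+1) * beta q k = q n 0 * (- haar_set q (Lset (k+1)))"
      using q_haar[of "k+1" n] 3 haar_pos[of "k+1"] by (simp add: beta_def)
    finally show ?thesis using 3 by (simp add: chr_def enat algebra_simps)
  qed
qed

lemma chi_char: "at_conv q (chi q k) m n = chi q k m * chi q k n"
proof (cases "m \<noteq> n \<or> (m = 0 \<and> n = 0)")
  case True
  then show ?thesis
    by (simp add: at_conv_off) (cases k, auto simp: chi_def max_def)
next
  case False
  then have "m = n" "n \<ge> 1" by auto
  then show ?thesis using chr_diag[of n k]
    by (simp add: at_conv_diag chi_chr power2_eq_square flip: of_real_mult of_real_sum)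
qed

lemma chi_in: "chi q k \<in> sym_chars q"
proof -
  have "chi q k 0 = 1" by (cases k) (auto simp: chi_def)
  then have nz: "chi q k \<noteq> (\<lambda>_. 0)" by (metis one_neq_zero)
  have "range (chi q k) \<subseteq> {1, complex_of_real (beta q (the_enat k)), 0}"
    by (cases k) (auto simp: chi_def)
  then have "bounded (range (chi q k))"
    by (meson bounded_subset finite.emptyI finite.insertI finite_imp_bounded)
  then show ?thesis using nz chi_char
    by (auto simp: sym_chars_def bchars_def chi_chr)
qed


lemma chi_at: "chi q b (Suc k) = 1 \<longleftrightarrow> enat k < b"
proof (cases b)
  case (enat k')
  have "complex_of_real (beta q k) \<noteq> 1" using beta_neg[of k] by (metis of_real_eq_1_iff less_irrefl zero_less_one order.strict_trans)
  then show ?thesis using enat by (auto simp: chi_def)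
qed (simp add: chi_def)

lemma chi_inj: "inj (chi q)"
proof (rule injI)
  fix a b assume ab: "chi q a = chi q b"
  have iff: "\<And>k. enat k < a \<longleftrightarrow> enat k < b" using ab chi_at by metis
  show "a = b"
  proof (rule ccontr)
    assume "a \<noteq> b"
    then consider "a < b" | "b < a" by (meson linorder_neqE)
    then show False
    proof cases
      case 1
      then obtain k where "a = enat k" by (cases a) auto
      then show False using iff[of k] 1 by simp
    next
      case 2
      then obtain k where "b = enat k" by (cases b) auto
      then show False using iff[of k] 2 by simp
    qed
  qed
qed

lemma classify:
  assumes c: "\<And>m n. at_conv q c m n = c m * c n" and nz: "c \<noteq> (\<lambda>_. 0)"
  shows "\<exists>k. c = chi q k"
proof -
  have off: "\<And>m n. m < n \<Longrightarrow> c n = c m * c n"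
    using c at_conv_off by (metis max.strict_order_iff less_irrefl max.commute)
  have c00: "c 0 = c 0 * c 0" using c[of 0 0] at_conv_off[of 0 0 c] by simp
  have c0: "c 0 = 1"
  proof (rule ccontr)
    assume "c 0 \<noteq> 1"
    then have "c 0 = 0" using c00 by (metis mult_cancel_right2)
    then have "\<And>n. c n = 0" using off by (metis mult_zero_left neq0_conv)
    then show False using nz by auto
  qed
  have one: "\<And>m n. m < n \<Longrightarrow> c n \<noteq> 0 \<Longrightarrow> c m = 1"
    using off by (metis mult_cancel_right2)
  have diag: "\<And>n. n \<ge> 1 \<Longrightarrow> (\<Sum>j\<le>n. complex_of_real (q n j) * c j) = c n * c n"
    using c at_conv_diag by metis
  show ?thesis
  proof (cases "\<forall>m. \<exists>n>m. c n \<noteq> 0")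
    case True
    then have "\<And>m. c m = 1" using one by blast
    then have "c = chi q \<infinity>" by (auto simp: chi_def)
    then show ?thesis by blast
  next
    case False
    then obtain m where m: "\<forall>n>m. c n = 0" by auto
    define N where "N = (LEAST m. \<forall>n>m. c n = 0)"
    have hN: "\<forall>n>N. c n = 0" unfolding N_def by (rule LeastI[of _ m]) (rule m)
    have cN: "c N \<noteq> 0"
    proof (cases "N = 0")
      case True then show ?thesis using c0 by simp
    next
      case False
      then have lt: "N - 1 < N" by simp
      have "\<not> (\<forall>n>N-1. c n = 0)"
        using not_less_Least[of "N-1" "\<lambda>m. \<forall>n>m. c n = 0"] lt unfolding N_def by blast
      then obtain n where n: "n > N - 1" "c n \<noteq> 0" by auto
      then have "\<not> n > N" using hN by blast
      then have "n = N" using n(1) False by linarith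
      then show ?thesis using n by simp
    qed
    have below: "\<And>j. j < N \<Longrightarrow> c j = 1" using one cN by blast
    have N1: "N \<ge> 1"
    proof (rule ccontr)
      assume "\<not> N \<ge> 1"
      then have "N = 0" by simp
      then have "c 1 = 0" using hN by simp
      then have "complex_of_real (q 1 0) = 0" using diag[of 1] c0 by simp
      then show False using qpos[of 1] by simp
    qed
    then obtain k where k: "N = k + 1" by (metis Suc_eq_plus1 Suc_pred' less_one not_less neq0_conv)
    define x where "x = c N"
    have r: "(\<Sum>j<N. q N j) = 1 - q N N" using total[OF N1] by linarith
    have "(\<Sum>j<N. complex_of_real (q N j) * c j) = (\<Sum>j<N. complex_of_real (q N j))"
      using below by (intro sum.cong) auto
    also have "\<dots> = complex_of_real (\<Sum>j<N. q N j)" by (rule of_real_sum[symmetric])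
    also have "\<dots> = 1 - complex_of_real (q N N)" by (simp only: r of_real_diff of_real_1)
    finally have sumN: "(\<Sum>j<N. complex_of_real (q N j) * c j) = 1 - complex_of_real (q N N)" .
    have "(\<Sum>j\<le>N. complex_of_real (q N j) * c j) = (1 - complex_of_real (q N N)) + complex_of_real (q N N) * x"
      unfolding sum_atMost_last sumN x_def ..
    then have eq: "(1 - complex_of_real (q N N)) + complex_of_real (q N N) * x = x * x"
      using diag[OF N1] x_def by simp
    have "x = 1 \<or> x = complex_of_real (q N N) - 1" by (rule quad_roots[OF eq])
    moreover have "x \<noteq> 1"
    proof
      assume x1: "x = 1"
      have "(\<Sum>j<Suc N. complex_of_real (q (Suc N) j) * c j) = (\<Sum>j<Suc N. complex_of_real (q (Suc N) j))"
      proof (rule sum.cong)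
        fix j assume "j \<in> {..<Suc N}"
        then have "c j = 1" using below x1 x_def by (cases "j < N") (auto simp: less_Suc_eq)
        then show "complex_of_real (q (Suc N) j) * c j = complex_of_real (q (Suc N) j)" by simp
      qed simp
      moreover have "c (Suc N) = 0" using hN by simp
      ultimately have "(\<Sum>j\<le>Suc N. complex_of_real (q (Suc N) j) * c j) = (\<Sum>j<Suc N. complex_of_real (q (Suc N) j))"
        unfolding sum_atMost_last by simp
      then have "(\<Sum>j<Suc N. complex_of_real (q (Suc N) j)) = 0"
        using diag[of "Suc N"] \<open>c (Suc N) = 0\<close> by simp
      then have "complex_of_real (\<Sum>j<Suc N. q (Suc N) j) = 0"
        by (simp only: of_real_sum)
      then have "(\<Sum>j<Suc N. q (Suc N) j) = 0" by (simp only: of_real_eq_0_iff)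
      then have "q (Suc N) (Suc N) = 1" using total[of "Suc N"] by linarith
      then show False using qnn_lt1[of "Suc N"] by simp
    qed
    ultimately have xb: "x = complex_of_real (beta q k)" using beta_eq[of k] k by simp
    have "c = chi q (enat k)"
    proof
      fix n
      consider "n \<le> k" | "n = k+1" | "n > k+1" by linarith
      then show "c n = chi q (enat k) n"
      proof cases
        case 1 then show ?thesis using below k by (simp add: chi_def)
      next
        case 2 then show ?thesis using xb x_def k by (simp add: chi_def)
      next
        case 3 then show ?thesis using hN k by (simp add: chi_def)
      qed
    qed
    then show ?thesis by blast
  qed
qed

lemma sym_range: "sym_chars q = range (chi q)" and bchars_eq: "bchars q = sym_chars q"
proof -
  have "bchars q \<subseteq> range (chi q)"
  proof
    fix c assume "c \<in> bchars q"
    then obtain k where "c = chi q k" using classify[of c] unfolding bchars_def by auto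
    then show "c \<in> range (chi q)" by auto
  qed
  moreover have "range (chi q) \<subseteq> sym_chars q" using chi_in by auto
  moreover have "sym_chars q \<subseteq> bchars q" by (auto simp: sym_chars_def)
  ultimately show "sym_chars q = range (chi q)" "bchars q = sym_chars q" by auto
qed

end


definition uccP :: "(nat \<Rightarrow> complex) set \<Rightarrow> bool" where
  "uccP U \<longleftrightarrow> (\<forall>f\<in>U. \<exists>K e. compact K \<and> e > 0 \<and> {g. \<forall>n\<in>K. norm (g n - f n) < e} \<subseteq> U)"

lemma ucc_istop: "istopology uccP"
  unfolding istopology_def
proof (intro conjI allI impI)
  fix S T :: "(nat \<Rightarrow> complex) set"
  assume S: "uccP S" and T: "uccP T"
  show "uccP (S \<inter> T)" unfolding uccP_def
  proof
    fix f assume "f \<in> S \<inter> T"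
    then have fS: "f \<in> S" and fT: "f \<in> T" by auto
    from S fS obtain K1 e1 where 1: "compact K1" "e1 > 0" "{g. \<forall>n\<in>K1. norm (g n - f n) < e1} \<subseteq> S"
      unfolding uccP_def by auto
    from T fT obtain K2 e2 where 2: "compact K2" "e2 > 0" "{g. \<forall>n\<in>K2. norm (g n - f n) < e2} \<subseteq> T"
      unfolding uccP_def by auto
    have "{g. \<forall>n\<in>K1 \<union> K2. norm (g n - f n) < min e1 e2} \<subseteq> S \<inter> T"
      using 1(3) 2(3) by auto
    moreover have "compact (K1 \<union> K2)" using 1(1) 2(1) by (rule compact_Un)
    moreover have "min e1 e2 > 0" using 1(2) 2(2) by simp
    ultimately show "\<exists>K e. compact K \<and> e > 0 \<and> {g. \<forall>n\<in>K. norm (g n - f n) < e} \<subseteq> S \<inter> T"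
      by (intro exI[of _ "K1 \<union> K2"] exI[of _ "min e1 e2"] conjI)
  qed
next
  fix \<K> :: "(nat \<Rightarrow> complex) set set"
  assume H: "\<forall>U\<in>\<K>. uccP U"
  show "uccP (\<Union>\<K>)" unfolding uccP_def
  proof
    fix f assume "f \<in> \<Union>\<K>"
    then obtain U where U: "U \<in> \<K>" "f \<in> U" by blast
    have "uccP U" using H U(1) by blast
    then obtain K e where Ke: "compact K" "e > 0" "{g. \<forall>n\<in>K. norm (g n - f n) < e} \<subseteq> U"
      using U(2) unfolding uccP_def by auto
    have "U \<subseteq> \<Union>\<K>" using U(1) by blast
    with Ke(3) have "{g. \<forall>n\<in>K. norm (g n - f n) < e} \<subseteq> \<Union>\<K>" by (rule subset_trans)
    then show "\<exists>K e. compact K \<and> e > 0 \<and> {g. \<forall>n\<in>K. norm (g n - f n) < e} \<subseteq> \<Union>\<K>"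
      using Ke(1,2) by (intro exI[of _ K] exI[of _ e] conjI)
  qed
qed

lemma ucc_eq: "ucc_topology = topology uccP"
  unfolding ucc_topology_def uccP_def ..

lemma openin_ucc: "openin ucc_topology U \<longleftrightarrow> (\<forall>f\<in>U. \<exists>K e. compact K \<and> e > 0 \<and>
        {g. \<forall>n\<in>K. norm (g n - f n) < e} \<subseteq> U)"
  unfolding ucc_eq topology_inverse'[OF ucc_istop] uccP_def ..

lemma topspace_ucc: "topspace ucc_topology = UNIV"
proof -
  have "openin ucc_topology UNIV" unfolding openin_ucc
  proof
    fix f :: "nat \<Rightarrow> complex"
    have "compact ({} :: nat set)" by simp
    then show "\<exists>K e. compact K \<and> e > 0 \<and> {g. \<forall>n\<in>K. norm (g n - f n) < e} \<subseteq> UNIV"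
      by (intro exI[of _ "{}"] exI[of _ 1] conjI) auto
  qed
  then show ?thesis using openin_subset by blast
qed

lemma tri: "norm ((a::complex) - c) \<le> norm (a - b) + norm (b - c)"
proof -
  have "a - c = (a - b) + (b - c)" by simp
  then show ?thesis using norm_triangle_ineq[of "a - b" "b - c"] by simp
qed

lemma ucc_open_pt: "openin ucc_topology {g. norm (g n - a) < r}"
  unfolding openin_ucc
proof
  fix f assume f: "f \<in> {g. norm (g n - a) < r}"
  define e where "e = r - norm (f n - a)"
  have "e > 0" using f by (simp add: e_def)
  moreover have "{g. \<forall>m\<in>{n}. norm (g m - f m) < e} \<subseteq> {g. norm (g n - a) < r}"
  proof
    fix g assume "g \<in> {g. \<forall>m\<in>{n}. norm (g m - f m) < e}"
    then have "norm (g n - f n) < e" by simp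
    moreover have "norm (g n - a) \<le> norm (g n - f n) + norm (f n - a)" by (rule tri)
    ultimately show "g \<in> {g. norm (g n - a) < r}" by (simp add: e_def)
  qed
  moreover have "compact {n}" by simp
  ultimately show "\<exists>K e. compact K \<and> e > 0 \<and> {g. \<forall>n\<in>K. norm (g n - f n) < e} \<subseteq> {g. norm (g n - a) < r}"
    by (intro exI[of _ "{n}"] exI[of _ e] conjI)
qed

lemma Hausdorff_ucc: "Hausdorff_space ucc_topology"
  unfolding Hausdorff_space_def
proof (intro allI impI)
  fix f g :: "nat \<Rightarrow> complex" assume "f \<in> topspace ucc_topology \<and> g \<in> topspace ucc_topology \<and> f \<noteq> g"
  then obtain n where n: "f n \<noteq> g n" by auto
  define r where "r = norm (f n - g n) / 2"
  have r: "r > 0" using n by (simp add: r_def)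
  have "disjnt {h. norm (h n - f n) < r} {h. norm (h n - g n) < r}"
  unfolding disjnt_iff
  proof (intro allI notI, elim conjE)
    fix h assume "h \<in> {h. norm (h n - f n) < r}" "h \<in> {h. norm (h n - g n) < r}"
    moreover have "norm (f n - g n) \<le> norm (f n - h n) + norm (h n - g n)" by (rule tri)
    moreover have "norm (f n - h n) = norm (h n - f n)" by (rule norm_minus_commute)
    ultimately show False by (simp add: r_def)
  qed
  moreover have "f \<in> {h. norm (h n - f n) < r}" "g \<in> {h. norm (h n - g n) < r}" using r by auto
  ultimately show "\<exists>U V. openin ucc_topology U \<and> openin ucc_topology V \<and> f \<in> U \<and> g \<in> V \<and> disjnt U V"
    using ucc_open_pt
    by (intro exI[of _ "{h. norm (h n - f n) < r}"] exI[of _ "{h. norm (h n - g n) < r}"] conjI)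
qed

lemma compact_nat_bound: "compact (K::nat set) \<Longrightarrow> \<exists>M. \<forall>n\<in>K. n \<le> M"
proof -
  assume "compact K"
  then obtain C' where "C' \<subseteq> K" "finite C'" "K \<subseteq> (\<Union>c\<in>C'. {c})"
    by (rule compactE_image[where f="\<lambda>n. {n}" and C=K]) (auto simp: open_discrete)
  then have "K \<subseteq> C'" by auto
  then have "finite K" using \<open>finite C'\<close> by (rule finite_subset)
  then show ?thesis using finite_nat_set_iff_bounded_le by auto
qed


context hq begin

lemma chi_cont: "continuous_map euclidean ucc_topology (chi q)"
  unfolding continuous_map_def
proof (intro conjI allI impI)
  show "chi q \<in> topspace euclidean \<rightarrow> topspace ucc_topology" by (simp add: topspace_ucc)
next
  fix U assume U: "openin ucc_topology U"
  have "open {x. chi q x \<in> U}" unfolding open_enat_iff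
  proof
    assume "\<infinity> \<in> {x. chi q x \<in> U}"
    then have "chi q \<infinity> \<in> U" by simp
    with U[unfolded openin_ucc] have ex: "\<exists>K e. compact K \<and> e > 0 \<and> {g. \<forall>n\<in>K. norm (g n - chi q \<infinity> n) < e} \<subseteq> U"
      by (rule bspec)
    then obtain K e where Ke: "compact K" "e > 0" "{g. \<forall>n\<in>K. norm (g n - chi q \<infinity> n) < e} \<subseteq> U"
      by (elim exE conjE)
    from compact_nat_bound[OF Ke(1)] obtain M where M: "\<forall>n\<in>K. n \<le> M" by (elim exE)
    have "{enat M<..} \<subseteq> {x. chi q x \<in> U}"
    proof
      fix x assume x: "x \<in> {enat M<..}"
      have "chi q x \<in> {g. \<forall>n\<in>K. norm (g n - chi q \<infinity> n) < e}"
      proof (cases x)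
        case (enat k)
        then have kM: "k > M" using x by simp
        have "\<forall>n\<in>K. chi q x n = 1"
        proof
          fix n assume "n \<in> K"
          then have "n \<le> k" using M kM by force
          then show "chi q x n = 1" using enat by (simp add: chi_def)
        qed
        then show ?thesis using Ke(2) by (simp add: chi_def)
      next
        case infinity
        then show ?thesis using Ke(2) by simp
      qed
      with Ke(3) have "chi q x \<in> U" by (rule subsetD)
      then show "x \<in> {x. chi q x \<in> U}" by simp
    qed
    then show "\<exists>n. {enat n<..} \<subseteq> {x. chi q x \<in> U}" by (rule exI)
  qed
  then show "openin euclidean {x \<in> topspace euclidean. chi q x \<in> U}" by simp
qed

lemma chi_homeo: "homeomorphic_map (euclidean :: enat topology) (subtopology ucc_topology (sym_chars q)) (chi q)"
proof (rule continuous_imp_homeomorphic_map)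
  show "continuous_map euclidean (subtopology ucc_topology (sym_chars q)) (chi q)"
    using chi_cont chi_in by (auto simp: continuous_map_in_subtopology)
  show "compact_space (euclidean :: enat topology)"
    by (simp add: compact_space_def compact_UNIV)
  show "Hausdorff_space (subtopology ucc_topology (sym_chars q))"
    by (simp add: Hausdorff_space_subtopology Hausdorff_ucc)
  show "chi q ` topspace euclidean = topspace (subtopology ucc_topology (sym_chars q))"
    by (simp add: topspace_ucc sym_range)
  show "inj_on (chi q) (topspace euclidean)" using chi_inj by simp
qed

end

theorem theorem3p6:
  fixes q :: "nat \<Rightarrow> nat \<Rightarrow> real"
  assumes nonneg: "\<And>n j. n \<ge> 1 \<Longrightarrow> q n j \<ge> 0"
      and fin: "\<And>n. n \<ge> 1 \<Longrightarrow> finite {j. q n j \<noteq> 0}"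
      and prob: "\<And>n. n \<ge> 1 \<Longrightarrow> (\<Sum>j\<in>{j. q n j \<noteq> 0}. q n j) = 1"
      and zero_in: "\<And>n. n \<ge> 1 \<Longrightarrow> q n 0 \<noteq> 0"
      and L_sub: "\<And>n. n \<ge> 1 \<Longrightarrow> Lset n \<subseteq> {j. q n j \<noteq> 0}"
      and sub_L: "\<And>n. n \<ge> 1 \<Longrightarrow> {j. q n j \<noteq> 0} \<subseteq> Lset n \<union> {n}"
      and mult: "\<And>m n. 0 < m \<Longrightarrow> m < n \<Longrightarrow> q n 0 = q n m * q m 0"
      and ineq: "\<And>m n. 0 < m \<Longrightarrow> m < n \<Longrightarrow>
                   q n 0 * (1 + (\<Sum>k\<in>{k. 0 < k \<and> k < n}. 1 / q k 0)) \<le> 1"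
  shows "bchars q = sym_chars q
    \<and> homeomorphic_map (euclidean :: enat topology) (subtopology ucc_topology (sym_chars q)) (chi q)
    \<and> (\<forall>k. beta q k = - (\<Sum>j\<in>Lset (k+1). haar q j) / haar q (k+1)
          \<and> beta q k = (haar q (k+1) - haar_set q (Lset (k+1))) / haar q (k+1) - 1
          \<and> beta q k = conv q (k+1) (k+1) (k+1) - 1
          \<and> beta q k = q (k+1) (k+1) - 1)"
proof -
  interpret hq q using nonneg fin prob zero_in sub_L mult by unfold_locales auto
  have "\<forall>k. beta q k = - (\<Sum>j\<in>Lset (k+1). haar q j) / haar q (k+1)
          \<and> beta q k = (haar q (k+1) - haar_set q (Lset (k+1))) / haar q (k+1) - 1
          \<and> beta q k = conv q (k+1) (k+1) (k+1) - 1
          \<and> beta q k = q (k+1) (k+1) - 1"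
  proof
    fix k
    have h: "haar q (k+1) \<noteq> 0" using haar_pos[of "k+1"] by simp
    show "beta q k = - (\<Sum>j\<in>Lset (k+1). haar q j) / haar q (k+1)
          \<and> beta q k = (haar q (k+1) - haar_set q (Lset (k+1))) / haar q (k+1) - 1
          \<and> beta q k = conv q (k+1) (k+1) (k+1) - 1
          \<and> beta q k = q (k+1) (k+1) - 1"
      using h beta_eq[of k]
      by (auto simp: beta_def haar_set_def conv_def diff_divide_distrib simp del: Suc_eq_plus1)
  qed
  then show ?thesis using bchars_eq chi_homeo by blast
qed

end
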